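(* Let $A,B,C$ be the observer canonical realization (described in the context) of a plant $b(s)/a(s)$ that is stable (i.e. $A$ is Hurwitz) and has positive DC gain. Then the first exit map $\psi_+(\xi;1)$ is defined for every $\xi\in\mathbb{R}^n$.
   Context: The plant transfer function is $\frac{b(s)}{a(s)}=\frac{b_{n-1}s^{n-1}+\dots+b_0}{s^n+a_{n-1}s^{n-1}+\dots+a_0}$ with real coefficients. Its observer canonical realization is: $A$ is the $n\times n$ matrix with $A_{i+1,i}=1$ for $i=1,\dots,n-1$, last column $(-a_0,\dots,-a_{n-1})^T$, other entries zero; $B=(b_0,\dots,b_{n-1})^T$; $C=(0,\dots,0,1)$. The DC gain is $b_0/a_0$. The first exit time is $\tau_+(\xi)=\inf\{t>0: Cx(t)<0\}$ where $\dot x=Ax-B$, $x(0)=\xi$; the first exit map is $\psi_+(\xi;1)=x(\tau_+(\xi))$, defined at every point whose trajectory crosses the hyperplane $\{Cx=0\}$ in finite time. *)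

theory Defs
  imports "HOL-Analysis.Analysis"
begin

(* Vectors in R^n are functions nat => real (only indices 0..n-1 matter);
   n x n matrices are functions nat => nat => real.  Indices are 0-based:
   paper index k corresponds to k-1 here. *)

text \<open>Observer canonical realization of b(s)/a(s); a k = a_k, b k = b_k (k < n).\<close>
definition obs_A :: "nat \<Rightarrow> (nat \<Rightarrow> real) \<Rightarrow> nat \<Rightarrow> nat \<Rightarrow> real" where
  "obs_A n a i j = (if j = n - 1 then - a i else if i = Suc j then 1 else 0)"

definition obs_B :: "(nat \<Rightarrow> real) \<Rightarrow> nat \<Rightarrow> real" where
  "obs_B b i = b i"

definition obs_C :: "nat \<Rightarrow> (nat \<Rightarrow> real) \<Rightarrow> real" where
  "obs_C n x = x (n - 1)"

definition hurwitz :: "nat \<Rightarrow> (nat \<Rightarrow> nat \<Rightarrow> real) \<Rightarrow> bool" where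
  "hurwitz n M \<longleftrightarrow> (\<forall>(mu::complex) (v::nat \<Rightarrow> complex).
      (\<exists>i<n. v i \<noteq> 0) \<and> (\<forall>i<n. (\<Sum>j<n. complex_of_real (M i j) * v j) = mu * v i)
      \<longrightarrow> Re mu < 0)"

definition is_trajectory :: "nat \<Rightarrow> (nat \<Rightarrow> nat \<Rightarrow> real) \<Rightarrow> (nat \<Rightarrow> real) \<Rightarrow> (nat \<Rightarrow> real)
    \<Rightarrow> (nat \<Rightarrow> real \<Rightarrow> real) \<Rightarrow> bool" where
  "is_trajectory n A B \<xi> x \<longleftrightarrow> (\<forall>i<n. x i 0 = \<xi> i) \<and>
     (\<forall>i<n. \<forall>t\<ge>0. (x i has_real_derivative ((\<Sum>j<n. A i j * x j t) - B i)) (at t within {0..}))"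

text \<open>The first exit map psi_+(xi;1) is defined at xi iff the trajectory reaches {C x < 0}
  at some positive time, i.e. the first exit time inf {t>0. C x(t) < 0} is finite.\<close>
definition exit_map_defined :: "nat \<Rightarrow> (nat \<Rightarrow> nat \<Rightarrow> real) \<Rightarrow> (nat \<Rightarrow> real) \<Rightarrow> (nat \<Rightarrow> real) \<Rightarrow> bool" where
  "exit_map_defined n A B \<xi> \<longleftrightarrow>
     (\<forall>x. is_trajectory n A B \<xi> x \<longrightarrow> {t. t > 0 \<and> obs_C n (\<lambda>i. x i t) < 0} \<noteq> {})"

end

theory Submission
  imports Defs "HOL-Computational_Algebra.Polynomial" "HOL-Computational_Algebra.Fundamental_Theorem_Algebra"
begin


lemma map_of_real_mult:
  "map_poly (complex_of_real) (p * q) = map_poly complex_of_real p * map_poly complex_of_real q"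
  by (rule poly_eqI) (simp add: coeff_map_poly coeff_mult)

lemma map_of_real_add:
  "map_poly (complex_of_real) (p + q) = map_poly complex_of_real p + map_poly complex_of_real q"
  by (rule poly_eqI) (simp add: coeff_map_poly)

lemma coeff_mult_nonneg:
  fixes p q :: "real poly"
  assumes "\<forall>i. coeff p i \<ge> 0" "\<forall>i. coeff q i \<ge> 0"
  shows "coeff (p * q) k \<ge> 0"
  unfolding coeff_mult using assms by (intro sum_nonneg mult_nonneg_nonneg) auto

lemma hurwitz_poly_coeffs:
  fixes p :: "real poly"
  assumes "lead_coeff p > 0" "\<forall>z. poly (map_poly complex_of_real p) z = 0 \<longrightarrow> Re z < 0"
  shows "\<forall>k. coeff p k \<ge> 0"
  using assms
proof (induction "degree p" arbitrary: p rule: less_induct)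
  case less
  show ?case
  proof (cases "degree p = 0")
    case True
    then show ?thesis using less.prems(1) by (metis coeff_eq_0 le_less not_gr0)
  next
    case False
    have "\<not> (\<exists>a l. a \<noteq> 0 \<and> l = 0 \<and> map_poly complex_of_real p = pCons a l)"
    proof
      assume "\<exists>a l. a \<noteq> 0 \<and> l = 0 \<and> map_poly complex_of_real p = pCons a l"
      then obtain a where "map_poly complex_of_real p = [:a:]" by auto
      then have "degree (map_poly complex_of_real p) = 0" by simp
      then show False using False by (simp add: degree_map_poly)
    qed
    then obtain z where z: "poly (map_poly complex_of_real p) z = 0"
      using fundamental_theorem_of_algebra_alt by blast
    have p0: "p \<noteq> 0" using False by auto
    show ?thesis
    proof (cases "Im z = 0")
      case True
      define r where "r = Re z"
      have zr: "z = complex_of_real r" using True r_def by (simp add: complex_eq_iff)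
      have "poly (map_poly complex_of_real p) z = complex_of_real (poly p r)"
        unfolding zr poly_altdef by (simp add: degree_map_poly coeff_map_poly of_real_sum)
      then have "poly p r = 0" using z by simp
      then obtain q where pq: "p = [:-r,1:] * q" using poly_eq_0_iff_dvd by (metis dvdE)
      have r0: "r < 0" using less.prems(2) z r_def by auto
      have q0: "q \<noteq> 0" using pq p0 by auto
      have "degree ([:-r,1:]*q) = degree [:-r,1:] + degree q" by (rule degree_mult_eq) (use q0 in auto)
      then have dq: "degree q < degree p" using pq by simp
      have "lead_coeff p = lead_coeff [:-r,1:] * lead_coeff q" unfolding pq by (rule lead_coeff_mult)
      moreover have "lead_coeff [:-r,1::real:] = 1" by simp
      ultimately have lq: "lead_coeff q = lead_coeff p" by simp
      have rq: "\<forall>w. poly (map_poly complex_of_real q) w = 0 \<longrightarrow> Re w < 0"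
      proof (intro allI impI)
        fix w assume "poly (map_poly complex_of_real q) w = 0"
        then have "poly (map_poly complex_of_real p) w = 0" unfolding pq map_of_real_mult poly_mult by simp
        then show "Re w < 0" using less.prems(2) by auto
      qed
      have cq: "\<forall>k. coeff q k \<ge> 0" using less.hyps[OF dq] lq less.prems(1) rq by auto
      have cd: "\<forall>i. coeff [:-r,1:] i \<ge> 0" using r0 by (auto simp: coeff_pCons split: nat.split)
      show ?thesis unfolding pq using coeff_mult_nonneg[OF cd cq] by blast
    next
      case False
      define d :: "real poly" where "d = [:(cmod z)^2, -2 * Re z, 1:]"
      have d0: "d \<noteq> 0" by (simp add: d_def)
      have degd: "degree d = 2" by (simp add: d_def)
      have dz: "poly (map_poly complex_of_real d) z = 0"
        by (simp add: d_def map_poly_pCons complex_eq_iff cmod_def power2_eq_square algebra_simps)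
      define \<rho> where "\<rho> = p mod d"
      define q where "q = p div d"
      have pqr: "p = d * q + \<rho>" by (simp add: \<rho>_def q_def)
      have "\<rho> = 0 \<or> degree \<rho> < 2" using degree_mod_less[OF d0] degd \<rho>_def by auto
      then have dr: "degree \<rho> \<le> 1" by auto
      have "poly (map_poly complex_of_real \<rho>) z = 0"
        using z dz pqr by (simp add: map_of_real_mult map_of_real_add)
      moreover have "poly (map_poly complex_of_real \<rho>) z = complex_of_real (coeff \<rho> 0) + complex_of_real (coeff \<rho> 1) * z"
      proof -
        have "degree \<rho> = 0 \<or> degree \<rho> = 1" using dr by auto
        then show ?thesis by (auto simp: poly_altdef degree_map_poly coeff_map_poly coeff_eq_0)
      qed
      ultimately have "complex_of_real (coeff \<rho> 0) + complex_of_real (coeff \<rho> 1) * z = 0" by simp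
      then have c01: "coeff \<rho> 1 = 0" "coeff \<rho> 0 = 0" using False
        by (auto simp: complex_eq_iff)
      have "\<rho> = 0"
      proof (rule poly_eqI)
        fix k show "coeff \<rho> k = coeff 0 k"
          using c01 dr coeff_eq_0[of \<rho> k] by (cases k; cases "k = 1") auto
      qed
      then have pq: "p = d * q" using pqr by simp
      have q0: "q \<noteq> 0" using pq p0 by auto
      have "degree (d*q) = degree d + degree q" by (rule degree_mult_eq) (use q0 d0 in auto)
      then have dq: "degree q < degree p" using pq degd by simp
      have "lead_coeff p = lead_coeff d * lead_coeff q" unfolding pq by (rule lead_coeff_mult)
      moreover have "lead_coeff d = 1" by (simp add: d_def)
      ultimately have lq: "lead_coeff q = lead_coeff p" by simp
      have rq: "\<forall>w. poly (map_poly complex_of_real q) w = 0 \<longrightarrow> Re w < 0"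
      proof (intro allI impI)
        fix w assume "poly (map_poly complex_of_real q) w = 0"
        then have "poly (map_poly complex_of_real p) w = 0" unfolding pq map_of_real_mult poly_mult by simp
        then show "Re w < 0" using less.prems(2) by auto
      qed
      have cq: "\<forall>k. coeff q k \<ge> 0" using less.hyps[OF dq] lq less.prems(1) rq by auto
      have rz: "Re z < 0" using less.prems(2) z by auto
      have cd: "\<forall>i. coeff d i \<ge> 0" using rz by (auto simp: d_def coeff_pCons split: nat.split)
      show ?thesis unfolding pq using coeff_mult_nonneg[OF cd cq] by blast
    qed
  qed
qed



lemma obsA_sum_real:
  fixes w :: "nat \<Rightarrow> real"
  assumes "i < n"
  shows "(\<Sum>j<n. obs_A n a i j * w j) = - a i * w (n-1) + (if i = 0 then 0 else w (i-1))"
proof -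
  have "\<And>j. obs_A n a i j * w j = (if j = n-1 then - a i * w j else 0) + (if i \<noteq> 0 \<and> j = i-1 then w j else 0)"
    using assms by (auto simp: obs_A_def)
  then have "(\<Sum>j<n. obs_A n a i j * w j) = (\<Sum>j<n. (if j = n-1 then - a i * w j else 0)) + (\<Sum>j<n. (if i \<noteq> 0 \<and> j = i-1 then w j else 0))"
    by (simp add: sum.distrib)
  also have "\<dots> = - a i * w (n-1) + (if i = 0 then 0 else w (i-1))"
    using assms by (cases "i = 0") (auto simp: sum.delta)
  finally show ?thesis .
qed

lemma obsA_sum_complex:
  fixes w :: "nat \<Rightarrow> complex"
  assumes "i < n"
  shows "(\<Sum>j<n. complex_of_real (obs_A n a i j) * w j) = - complex_of_real (a i) * w (n-1) + (if i = 0 then 0 else w (i-1))"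
proof -
  have "\<And>j. complex_of_real (obs_A n a i j) * w j = (if j = n-1 then - complex_of_real (a i) * w j else 0) + (if i \<noteq> 0 \<and> j = i-1 then w j else 0)"
    using assms by (auto simp: obs_A_def)
  then have "(\<Sum>j<n. complex_of_real (obs_A n a i j) * w j) = (\<Sum>j<n. (if j = n-1 then - complex_of_real (a i) * w j else 0)) + (\<Sum>j<n. (if i \<noteq> 0 \<and> j = i-1 then w j else 0))"
    by (simp add: sum.distrib)
  also have "\<dots> = - complex_of_real (a i) * w (n-1) + (if i = 0 then 0 else w (i-1))"
    using assms by (cases "i = 0") (auto simp: sum.delta)
  finally show ?thesis .
qed

lemma hurwitz_root:
  assumes n: "n \<ge> 1" and h: "hurwitz n (obs_A n a)"
    and root: "z ^ n + (\<Sum>k<n. complex_of_real (a k) * z ^ k) = 0"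
  shows "Re z < 0"
proof -
  define v where "v i = z ^ (n-1-i) + (\<Sum>k\<in>{i+1..<n}. complex_of_real (a k) * z ^ (k-1-i))" for i
  have vlast: "v (n-1) = 1" using n by (simp add: v_def)
  have zv: "z * v i = z ^ (n-i) + (\<Sum>k\<in>{i+1..<n}. complex_of_real (a k) * z ^ (k-i))" if "i < n" for i
  proof -
    have "z * z ^ (n-1-i) = z ^ (n-i)" using that by (metis Suc_diff_Suc diff_Suc_eq_diff_pred power_Suc)
    moreover have "z * (\<Sum>k\<in>{i+1..<n}. complex_of_real (a k) * z ^ (k-1-i)) = (\<Sum>k\<in>{i+1..<n}. complex_of_real (a k) * z ^ (k-i))"
      unfolding sum_distrib_left
    proof (rule sum.cong)
      fix k assume "k \<in> {i+1..<n}"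
      then have "k - i = Suc (k-1-i)" by auto
      then show "z * (complex_of_real (a k) * z ^ (k - 1 - i)) = complex_of_real (a k) * z ^ (k - i)"
        by simp
    qed simp
    ultimately show ?thesis by (simp add: v_def distrib_left)
  qed
  have eig: "(\<Sum>j<n. complex_of_real (obs_A n a i j) * v j) = z * v i" if "i < n" for i
  proof (cases "i = 0")
    case True
    have "(\<Sum>k<n. complex_of_real (a k) * z ^ k) = complex_of_real (a 0) + (\<Sum>k\<in>{1..<n}. complex_of_real (a k) * z ^ k)"
      using n by (simp add: lessThan_atLeast0 sum.atLeast_Suc_lessThan)
    then show ?thesis using True zv[OF that] root vlast that
      by (simp add: obsA_sum_complex) (metis add.commute add.left_commute add_eq_0_iff)
  next
    case False
    have "v (i-1) = z ^ (n-i) + (\<Sum>k\<in>{i..<n}. complex_of_real (a k) * z ^ (k-i))"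
      using False that by (simp add: v_def)
    also have "\<dots> = z ^ (n-i) + complex_of_real (a i) + (\<Sum>k\<in>{i+1..<n}. complex_of_real (a k) * z ^ (k-i))"
      using that by (simp add: sum.atLeast_Suc_lessThan)
    finally show ?thesis using False zv[OF that] vlast that by (simp add: obsA_sum_complex)
  qed
  have "\<exists>i<n. v i \<noteq> 0" using vlast n by (intro exI[of _ "n-1"]) auto
  moreover have "\<forall>i<n. (\<Sum>j<n. complex_of_real (obs_A n a i j) * v j) = z * v i" using eig by auto
  ultimately show ?thesis using h unfolding hurwitz_def by blast
qed

lemma eventually_down:
  fixes f f' :: "real \<Rightarrow> real"
  assumes d: "\<forall>t>0. (f has_real_derivative f' t) (at t within {0..})"
    and c: "c > 0" and T: "T > 0" and b: "\<forall>t\<ge>T. f' t \<le> -c"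
  shows "\<exists>T'\<ge>T. \<forall>t\<ge>T'. f t \<le> M"
proof -
  have dd: "(f has_real_derivative f' t) (at t)" if "t > 0" for t
  proof -
    have "(f has_real_derivative f' t) (at t within {0<..})"
      by (rule DERIV_subset[OF d[rule_format, OF that]]) auto
    moreover have "at t within {0<..} = at t" using that by (intro at_within_open) auto
    ultimately show ?thesis by simp
  qed
  have mono: "f t \<le> f T - c * (t - T)" if "t \<ge> T" for t
  proof -
    define g where "g s = f s + c * s" for s
    have "g t \<le> g T"
    proof (rule DERIV_nonpos_imp_nonincreasing[OF that])
      fix s assume "T \<le> s" "s \<le> t"
      then have "s > 0" "f' s \<le> -c" using T b by auto
      then show "\<exists>y. (g has_real_derivative y) (at s) \<and> y \<le> 0"
        unfolding g_def by (intro exI[of _ "f' s + c"]) (auto intro!: derivative_eq_intros dd)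
    qed
    then show ?thesis by (simp add: g_def algebra_simps)
  qed
  define T' where "T' = max T (T + (f T - M) / c)"
  have "f t \<le> M" if "t \<ge> T'" for t
  proof -
    have "t - T \<ge> (f T - M) / c" using that by (simp add: T'_def)
    then have "c * (t - T) \<ge> f T - M" using c by (simp add: field_simps)
    then show ?thesis using mono[of t] that by (simp add: T'_def)
  qed
  moreover have "T' \<ge> T" by (simp add: T'_def)
  ultimately show ?thesis by blast
qed



theorem mainTheorem2:
  fixes n :: nat and a b :: "nat \<Rightarrow> real"
  assumes "n \<ge> 1"
    and "hurwitz n (obs_A n a)"
    and "b 0 / a 0 > 0"
  shows "\<forall>\<xi>::nat \<Rightarrow> real. exit_map_defined n (obs_A n a) (obs_B b) \<xi>"
proof -
  note n = assms(1)
  define P :: "real poly" where "P = monom 1 n + (\<Sum>i<n. monom (a i) i)"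
  have coeffP: "coeff P k = (if k = n then 1 else 0) + (if k < n then a k else 0)" for k
    by (auto simp: P_def coeff_sum coeff_monom sum.delta sum.delta' lessThan_def)
  have degP: "degree P = n"
  proof (rule antisym)
    show "degree P \<le> n" by (rule degree_le) (simp add: coeffP)
    show "n \<le> degree P" by (rule le_degree) (simp add: coeffP)
  qed
  have lP: "lead_coeff P > 0" using degP coeffP by simp
  have mapP: "map_poly complex_of_real P = monom 1 n + (\<Sum>i<n. monom (complex_of_real (a i)) i)"
    by (rule poly_eqI) (auto simp: coeff_map_poly coeffP coeff_sum coeff_monom sum.delta sum.delta' lessThan_def)
  have rootsP: "\<forall>z. poly (map_poly complex_of_real P) z = 0 \<longrightarrow> Re z < 0"
  proof (intro allI impI)
    fix z assume "poly (map_poly complex_of_real P) z = 0"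
    then have "z ^ n + (\<Sum>k<n. complex_of_real (a k) * z ^ k) = 0"
      unfolding mapP by (simp add: poly_sum poly_monom)
    then show "Re z < 0" using hurwitz_root[OF n assms(2)] by blast
  qed
  have cP: "\<forall>k. coeff P k \<ge> 0" by (rule hurwitz_poly_coeffs[OF lP rootsP])
  have apos: "a i \<ge> 0" if "i < n" for i using cP[rule_format, of i] that by (simp add: coeffP)
  have a00: "a 0 \<noteq> 0" using assms(3) by auto
  have a0: "a 0 > 0" using apos[of 0] n a00 by auto
  have b0: "b 0 > 0" using assms(3) a0 by (simp add: zero_less_divide_iff)
  show ?thesis
  proof (intro allI)
    fix \<xi> :: "nat \<Rightarrow> real"
    show "exit_map_defined n (obs_A n a) (obs_B b) \<xi>"
      unfolding exit_map_defined_def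
    proof (intro allI impI notI)
      fix x assume tr: "is_trajectory n (obs_A n a) (obs_B b) \<xi> x"
      assume "{t. t > 0 \<and> obs_C n (\<lambda>i. x i t) < 0} = {}"
      then have ypos: "x (n-1) t \<ge> 0" if "t > 0" for t
      proof -
        have "\<not> (t > 0 \<and> obs_C n (\<lambda>i. x i t) < 0)" using \<open>{t. t > 0 \<and> obs_C n (\<lambda>i. x i t) < 0} = {}\<close> by blast
        then show ?thesis using that by (simp add: obs_C_def)
      qed
      define D where "D i t = - a i * x (n-1) t + (if i = 0 then 0 else x (i-1) t) - b i" for i t
      have der: "\<forall>t>0. (x i has_real_derivative D i t) (at t within {0..})" if "i < n" for i
      proof (intro allI impI)
        fix t :: real assume "t > 0"
        then have "(x i has_real_derivative ((\<Sum>j<n. obs_A n a i j * x j t) - obs_B b i)) (at t within {0..})"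
          using tr that unfolding is_trajectory_def by auto
        then show "(x i has_real_derivative D i t) (at t within {0..})"
          using obsA_sum_real[OF that, of a "\<lambda>j. x j t"] by (simp add: D_def obs_B_def)
      qed
      have claim: "\<forall>M. \<exists>T\<ge>1. \<forall>t\<ge>T. x i t \<le> M" if "i < n" for i
        using that
      proof (induction i)
        case 0
        show ?case
        proof
          fix M
          have "\<forall>t\<ge>1. D 0 t \<le> - b 0"
          proof (intro allI impI)
            fix t :: real assume "t \<ge> 1"
            then have "a 0 * x (n-1) t \<ge> 0" using a0 ypos[of t] by simp
            then show "D 0 t \<le> - b 0" by (simp add: D_def)
          qed
          from eventually_down[OF der[OF 0] b0 _ this, of M] show "\<exists>T\<ge>1. \<forall>t\<ge>T. x 0 t \<le> M" by simp
        qed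
      next
        case (Suc i)
        then obtain T1 where T1: "T1 \<ge> 1" "\<forall>t\<ge>T1. x i t \<le> b (Suc i) - 1" by auto
        show ?case
        proof
          fix M
          have "\<forall>t\<ge>T1. D (Suc i) t \<le> - 1"
          proof (intro allI impI)
            fix t :: real assume "t \<ge> T1"
            then have "a (Suc i) * x (n-1) t \<ge> 0" using apos[OF Suc.prems] ypos[of t] T1 by simp
            moreover have "x i t \<le> b (Suc i) - 1" using T1 \<open>t \<ge> T1\<close> by simp
            ultimately show "D (Suc i) t \<le> - 1" by (simp add: D_def)
          qed
          have "T1 > 0" using T1 by simp
          from eventually_down[OF der[OF Suc.prems] zero_less_one this \<open>\<forall>t\<ge>T1. D (Suc i) t \<le> - 1\<close>, of M]
          obtain T' where "T' \<ge> T1" "\<forall>t\<ge>T'. x (Suc i) t \<le> M" by blast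
          then show "\<exists>T\<ge>1. \<forall>t\<ge>T. x (Suc i) t \<le> M" using T1 by (intro exI[of _ T']) auto
        qed
      qed
      obtain T where T: "T \<ge> 1" "\<forall>t\<ge>T. x (n-1) t \<le> -1" using claim[of "n-1"] n by force
      then show False using ypos[of T] by force
    qed
  qed
qed

end
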